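(* Let $\boldsymbol{W}\in\mathbb{R}^{N\times d}$ have unit-norm rows $\boldsymbol{w}_j$, let $|b_j|\le r_b$ for all $j$, and let $S\subseteq[N]$ be such that $\|\Pi_{\boldsymbol{U}}\boldsymbol{w}_j-\boldsymbol{w}_j\|^2\le2\zeta$ for all $j\in S$. Let $\boldsymbol{a}^*\in\mathbb{R}^N$ satisfy $a^*_j=0$ for $j\notin S$ and $\|\boldsymbol{a}^*\|\le\tilde r_a/\sqrt{|S|}$. Assume $\boldsymbol{x}$ is zero-mean with subGaussian norm bounded by an absolute constant and $\sigma$ satisfies condition (PL). Then $$\mathbb{E}\Big[\max_{\|\boldsymbol{\delta}\|\le\varepsilon}\big(f(\boldsymbol{x}+\boldsymbol{\delta};\boldsymbol{a}^*,\Pi_{\boldsymbol{U}}\boldsymbol{W},\boldsymbol{b})-f(\boldsymbol{x}+\boldsymbol{\delta};\boldsymbol{a}^*,\boldsymbol{W},\boldsymbol{b})\big)^2\Big]\le C_{\bar q}L_\sigma^2\tilde r_a^2\big(1+r_b^{2(\bar q-1)}+\varepsilon^{2(\bar q-1)}\big)(1+\varepsilon^2)\zeta,$$ where $C_{\bar q}$ depends only on $\bar q$.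
   Context: $\boldsymbol{U}\in\mathbb{R}^{k\times d}$ has orthonormal rows $\boldsymbol{u}_1,\dots,\boldsymbol{u}_k$. For unit $\boldsymbol{w}$, $\Pi_{\boldsymbol{U}}\boldsymbol{w}=\boldsymbol{U}^\top\boldsymbol{U}\boldsymbol{w}/\|\boldsymbol{U}\boldsymbol{w}\|$ (and $\Pi_{\boldsymbol{U}}\boldsymbol{w}=\boldsymbol{u}_1$ if $\boldsymbol{U}\boldsymbol{w}=0$); $\Pi_{\boldsymbol{U}}\boldsymbol{W}$ is the matrix with rows $\Pi_{\boldsymbol{U}}\boldsymbol{w}_j$. Network $f(\boldsymbol{x};\boldsymbol{a},\boldsymbol{W},\boldsymbol{b})=\sum_ja_j\sigma(\langle\boldsymbol{w}_j,\boldsymbol{x}\rangle+b_j)$. Condition (PL): $\sigma(0)=0$ and $|\sigma(z_1)-\sigma(z_2)|\le L_\sigma(|z_1|^{\bar q-1}+|z_2|^{\bar q-1}+1)|z_1-z_2|$ for all $z_1,z_2$, with $\bar q\ge1$. $\varepsilon\ge0$ is the adversary budget. *)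

theory Defs
  imports "HOL-Probability.Probability"
begin

(* Vectors in R^d are represented as functions nat => real, only indices < d matter.
   Matrices are nat => nat => real (row index, column index). *)

definition dot :: "nat \<Rightarrow> (nat \<Rightarrow> real) \<Rightarrow> (nat \<Rightarrow> real) \<Rightarrow> real" where
  "dot d v w = (\<Sum>i<d. v i * w i)"

definition vnorm :: "nat \<Rightarrow> (nat \<Rightarrow> real) \<Rightarrow> real" where
  "vnorm d v = sqrt (dot d v v)"

(* power with the convention x^0 = 1 (also for x = 0), for x >= 0 *)
definition npow :: "real \<Rightarrow> real \<Rightarrow> real" where
  "npow x a = (if a = 0 then 1 else x powr a)"

definition orthonormal_rows :: "nat \<Rightarrow> nat \<Rightarrow> (nat \<Rightarrow> nat \<Rightarrow> real) \<Rightarrow> bool" where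
  "orthonormal_rows k d U \<longleftrightarrow> (\<forall>l<k. \<forall>m<k. dot d (U l) (U m) = (if l = m then 1 else 0))"

definition Umul :: "nat \<Rightarrow> (nat \<Rightarrow> nat \<Rightarrow> real) \<Rightarrow> (nat \<Rightarrow> real) \<Rightarrow> (nat \<Rightarrow> real)" where
  "Umul d U w = (\<lambda>l. dot d (U l) w)"

(* Pi_U w = U^T U w / ||U w||, and = u_1 (first row) if U w = 0 *)
definition proj_U :: "nat \<Rightarrow> nat \<Rightarrow> (nat \<Rightarrow> nat \<Rightarrow> real) \<Rightarrow> (nat \<Rightarrow> real) \<Rightarrow> (nat \<Rightarrow> real)" where
  "proj_U k d U w =
     (if vnorm k (Umul d U w) = 0 then (\<lambda>i. if i < d then U 0 i else 0)
      else (\<lambda>i. if i < d then (\<Sum>l<k. U l i * Umul d U w l) / vnorm k (Umul d U w) else 0))"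

definition projW :: "nat \<Rightarrow> nat \<Rightarrow> (nat \<Rightarrow> nat \<Rightarrow> real) \<Rightarrow> (nat \<Rightarrow> nat \<Rightarrow> real) \<Rightarrow> (nat \<Rightarrow> nat \<Rightarrow> real)" where
  "projW k d U W = (\<lambda>j. proj_U k d U (W j))"

definition net :: "nat \<Rightarrow> nat \<Rightarrow> (real \<Rightarrow> real) \<Rightarrow> (nat \<Rightarrow> real) \<Rightarrow> (nat \<Rightarrow> nat \<Rightarrow> real)
                   \<Rightarrow> (nat \<Rightarrow> real) \<Rightarrow> (nat \<Rightarrow> real) \<Rightarrow> real" where
  "net N d \<sigma> a W b x = (\<Sum>j<N. a j * \<sigma> (dot d (W j) x + b j))"

definition PL_cond :: "(real \<Rightarrow> real) \<Rightarrow> real \<Rightarrow> real \<Rightarrow> bool" where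
  "PL_cond \<sigma> q L \<longleftrightarrow> \<sigma> 0 = 0 \<and>
     (\<forall>z1 z2. \<bar>\<sigma> z1 - \<sigma> z2\<bar> \<le> L * (npow \<bar>z1\<bar> (q - 1) + npow \<bar>z2\<bar> (q - 1) + 1) * \<bar>z1 - z2\<bar>)"

(* scalar subGaussian (psi_2) norm: inf { t > 0 : E exp(X^2/t^2) <= 2 } (infinite if no such t) *)
definition psi2_norm :: "'a measure \<Rightarrow> ('a \<Rightarrow> real) \<Rightarrow> ereal" where
  "psi2_norm M X = Inf {ereal t | t. t > 0 \<and> (\<integral>\<^sup>+ \<omega>. ennreal (exp ((X \<omega>)\<^sup>2 / t\<^sup>2)) \<partial>M) \<le> 2}"

definition vec_psi2_norm :: "nat \<Rightarrow> (nat \<Rightarrow> real) measure \<Rightarrow> ereal" where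
  "vec_psi2_norm d M = (SUP v\<in>{v. vnorm d v = 1}. psi2_norm M (\<lambda>x. dot d v x))"

definition dball :: "nat \<Rightarrow> real \<Rightarrow> (nat \<Rightarrow> real) set" where
  "dball d \<epsilon> = {\<delta>. (\<forall>i\<ge>d. \<delta> i = 0) \<and> vnorm d \<delta> \<le> \<epsilon>}"

end

theory Submission
  imports Defs
begin

lemma npow_nonneg: "0 \<le> npow s p"
  by (simp add: npow_def)

lemma npow_exp_bound:
  assumes "0 \<le> s" "0 \<le> p"
  shows "npow s p \<le> exp (p\<^sup>2 / 4) * exp (s\<^sup>2)"
proof (cases "p = 0")
  case True thus ?thesis by (simp add: npow_def)
next
  case pn: False
  show ?thesis
  proof (cases "s = 0")
    case True thus ?thesis using pn by (simp add: npow_def)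
  next
    case False
    hence sp: "s > 0" using assms by simp
    have "npow s p = exp (p * ln s)" using pn sp by (simp add: npow_def powr_def)
    also have "\<dots> \<le> exp (p * s)"
      using ln_le_minus_one[OF sp] assms by (simp add: mult_left_mono)
    also have "\<dots> \<le> exp (p\<^sup>2/4 + s\<^sup>2)"
    proof -
      have "0 \<le> (s - p/2)\<^sup>2" by simp
      hence "p * s \<le> p\<^sup>2/4 + s\<^sup>2" by (simp add: power2_eq_square algebra_simps)
      thus ?thesis by simp
    qed
    finally show ?thesis by (simp add: exp_add)
  qed
qed

lemma npow_div:
  assumes "0 \<le> s" "0 < t"
  shows "npow s p = npow t p * npow (s / t) p"
  using assms by (simp add: npow_def powr_divide)

lemma npow_exp_bound_t:
  assumes "0 \<le> s" "0 \<le> p" "0 < t"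
  shows "npow s p \<le> npow t p * exp (p\<^sup>2 / 4) * exp ((s/t)\<^sup>2)"
proof -
  have "npow (s/t) p \<le> exp (p\<^sup>2 / 4) * exp ((s/t)\<^sup>2)"
    using assms by (intro npow_exp_bound) auto
  hence "npow t p * npow (s/t) p \<le> npow t p * (exp (p\<^sup>2 / 4) * exp ((s/t)\<^sup>2))"
    by (simp add: mult_left_mono npow_nonneg)
  thus ?thesis using npow_div[OF assms(1,3), of p] by simp
qed

lemma npow_mono:
  assumes "0 \<le> a" "a \<le> b" "0 \<le> p"
  shows "npow a p \<le> npow b p"
  using assms by (simp add: npow_def powr_mono2)

lemma npow_sq:
  assumes "0 \<le> r" "0 \<le> p"
  shows "npow r (2 * p) = (npow r p)\<^sup>2"
  using assms by (auto simp add: npow_def powr_powr[symmetric] power2_eq_square powr_add[symmetric])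

lemma npow_ge1: "1 \<le> s \<Longrightarrow> 0 \<le> p \<Longrightarrow> 1 \<le> npow s p"
  by (simp add: npow_def ge_one_powr_ge_zero)

lemma npow_sum3:
  assumes "0 \<le> a" "0 \<le> b" "0 \<le> c" "0 \<le> p"
  shows "npow (a + b + c) p \<le> npow 3 p * (npow a p + npow b p + npow c p)"
proof -
  define m where "m = max a (max b c)"
  have m0: "0 \<le> m" using assms by (simp add: m_def)
  have "npow (a+b+c) p \<le> npow (3 * m) p"
    using assms by (intro npow_mono) (auto simp: m_def)
  also have "\<dots> = npow 3 p * npow m p"
    using m0 by (simp add: npow_def powr_mult)
  also have "npow m p \<le> npow a p + npow b p + npow c p"
    using npow_nonneg[of a p] npow_nonneg[of b p] npow_nonneg[of c p]
    by (auto simp: m_def max_def)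
  hence "npow 3 p * npow m p \<le> npow 3 p * (npow a p + npow b p + npow c p)"
    by (simp add: mult_left_mono npow_nonneg)
  finally show ?thesis .
qed

lemma dot_sq_nonneg: "0 \<le> dot d v v"
  unfolding dot_def by (intro sum_nonneg) simp

lemma vnorm_nonneg: "0 \<le> vnorm d v"
  using dot_sq_nonneg[of d v] by (simp add: vnorm_def)

lemma vnorm_sq: "(vnorm d v)\<^sup>2 = dot d v v"
  using dot_sq_nonneg[of d v] by (simp add: vnorm_def)

lemma dot_CS: "\<bar>dot d v w\<bar> \<le> vnorm d v * vnorm d w"
proof -
  have "(dot d v w)\<^sup>2 \<le> dot d v v * dot d w w"
    unfolding dot_def using Cauchy_Schwarz_ineq_sum[of v w "{..<d}"] by (simp add: power2_eq_square)
  hence "sqrt ((dot d v w)\<^sup>2) \<le> sqrt (dot d v v * dot d w w)" by (rule real_sqrt_le_mono)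
  thus ?thesis by (simp add: vnorm_def real_sqrt_mult)
qed

lemma dot_add_right: "dot d v (\<lambda>i. x i + y i) = dot d v x + dot d v y"
  by (simp add: dot_def algebra_simps sum.distrib)

lemma dot_diff_left: "dot d (\<lambda>i. v i - w i) x = dot d v x - dot d w x"
  by (simp add: dot_def algebra_simps sum_subtractf)

lemma dot_scale_left: "dot d (\<lambda>i. v i / c) x = dot d v x / c"
  by (simp add: dot_def sum_divide_distrib)

lemma proj_norm:
  assumes "k \<ge> 1" "orthonormal_rows k d U"
  shows "vnorm d (proj_U k d U w) = 1"
proof -
  define c where "c = Umul d U w"
  define n where "n = vnorm k c"
  show ?thesis
  proof (cases "n = 0")
    case True
    have "dot d (proj_U k d U w) (proj_U k d U w) = dot d (U 0) (U 0)"
      using True unfolding proj_U_def c_def n_def by (simp add: dot_def)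
    also have "\<dots> = 1" using assms unfolding orthonormal_rows_def by auto
    finally show ?thesis by (simp add: vnorm_def)
  next
    case False
    have n0: "n > 0" using False vnorm_nonneg[of k c] n_def by simp
    have "dot d (proj_U k d U w) (proj_U k d U w)
          = (\<Sum>i<d. (\<Sum>l<k. U l i * c l) * (\<Sum>m<k. U m i * c m)) / n\<^sup>2"
      using False unfolding proj_U_def c_def[symmetric] n_def[symmetric]
      by (simp add: dot_def sum_divide_distrib[symmetric] power2_eq_square)
    also have "(\<Sum>i<d. (\<Sum>l<k. U l i * c l) * (\<Sum>m<k. U m i * c m))
             = (\<Sum>l<k. \<Sum>m<k. c l * c m * dot d (U l) (U m))"
      by (simp add: dot_def sum_product sum_distrib_left algebra_simps sum.swap[of _ "{..<d}"])
    also have "\<dots> = (\<Sum>l<k. c l * c l)"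
    proof (rule sum.cong[OF refl])
      fix l assume l: "l \<in> {..<k}"
      have "(\<Sum>m<k. c l * c m * dot d (U l) (U m)) = (\<Sum>m<k. if m = l then c l * c l else 0)"
        using assms(2) l unfolding orthonormal_rows_def by (intro sum.cong) auto
      also have "\<dots> = c l * c l" using l by (simp add: sum.delta)
      finally show "(\<Sum>m<k. c l * c m * dot d (U l) (U m)) = c l * c l" .
    qed
    also have "\<dots> = n\<^sup>2" by (simp add: n_def vnorm_sq dot_def)
    finally show ?thesis using n0 by (simp add: vnorm_def)
  qed
qed

lemma psi_bound:
  assumes "vec_psi2_norm d M \<le> ereal K" "K < t" "vnorm d u = 1"
  shows "(\<integral>\<^sup>+ x. ennreal (exp ((dot d u x)\<^sup>2 / t\<^sup>2)) \<partial>M) \<le> 2"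
proof -
  have "psi2_norm M (\<lambda>x. dot d u x) \<le> vec_psi2_norm d M"
    unfolding vec_psi2_norm_def using assms(3) by (intro SUP_upper) auto
  hence "psi2_norm M (\<lambda>x. dot d u x) < ereal t" using assms(1,2)
    by (meson ereal_less_eq(3) order.trans order_le_less_trans less_ereal.simps(1))
  then obtain t0 where t0: "t0 > 0" "t0 < t"
    "(\<integral>\<^sup>+ x. ennreal (exp ((dot d u x)\<^sup>2 / t0\<^sup>2)) \<partial>M) \<le> 2"
    unfolding psi2_norm_def Inf_less_iff by auto
  have "(\<integral>\<^sup>+ x. ennreal (exp ((dot d u x)\<^sup>2 / t\<^sup>2)) \<partial>M)
      \<le> (\<integral>\<^sup>+ x. ennreal (exp ((dot d u x)\<^sup>2 / t0\<^sup>2)) \<partial>M)"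
  proof (rule nn_integral_mono)
    fix x
    have "t0\<^sup>2 \<le> t\<^sup>2" using t0 by (intro power_mono) auto
    hence "(dot d u x)\<^sup>2 / t\<^sup>2 \<le> (dot d u x)\<^sup>2 / t0\<^sup>2"
      using t0 by (intro divide_left_mono) auto
    thus "ennreal (exp ((dot d u x)\<^sup>2 / t\<^sup>2)) \<le> ennreal (exp ((dot d u x)\<^sup>2 / t0\<^sup>2))"
      by (intro ennreal_leI) simp
  qed
  with t0(3) show ?thesis by simp
qed

definition kc :: "real \<Rightarrow> real \<Rightarrow> real" where
  "kc t r = npow t r * exp (r\<^sup>2 / 4)"

lemma kc_nonneg: "0 \<le> kc t r"
  by (simp add: kc_def npow_nonneg)

lemma pow_bound_t:
  assumes "0 \<le> s" "0 \<le> r" "0 < t"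
  shows "npow s r \<le> kc t r * exp ((s/t)\<^sup>2)"
  using npow_exp_bound_t[OF assms] by (simp add: kc_def)

lemma npow_nat: "0 \<le> s \<Longrightarrow> npow s (real n) = s ^ n"
  by (cases "s = 0") (auto simp: npow_def powr_realpow)

definition G0c :: "real \<Rightarrow> real \<Rightarrow> real" where
  "G0c p t = kc t (4*p) + kc t (2*p) + kc t 4 + kc t 2 + 1"

lemma G0_bound:
  assumes "0 \<le> A" "0 \<le> B" "0 \<le> Y" "0 \<le> p" "0 < t"
  shows "((npow A p)\<^sup>2 + (npow B p)\<^sup>2 + 1) * (Y\<^sup>2 + 1)
     \<le> G0c p t * (exp ((A/t)\<^sup>2) + exp ((B/t)\<^sup>2) + exp ((Y/t)\<^sup>2))"
proof -
  define a where "a = (npow A p)\<^sup>2"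
  define b where "b = (npow B p)\<^sup>2"
  define y where "y = Y\<^sup>2"
  have a2: "a = npow A (2*p)" "a\<^sup>2 = npow A (4*p)"
    using assms npow_sq[of A p] npow_sq[of A "2*p"] by (auto simp: a_def)
  have b2: "b = npow B (2*p)" "b\<^sup>2 = npow B (4*p)"
    using assms npow_sq[of B p] npow_sq[of B "2*p"] by (auto simp: b_def)
  have y2: "y = npow Y 2" "y\<^sup>2 = npow Y 4"
    using npow_nat[OF assms(3), of 2] npow_nat[OF assms(3), of 4] by (auto simp: y_def)
  define EA where "EA = exp ((A/t)\<^sup>2)"
  define EB where "EB = exp ((B/t)\<^sup>2)"
  define EY where "EY = exp ((Y/t)\<^sup>2)"
  have e1: "1 \<le> EA" "1 \<le> EB" "1 \<le> EY" by (auto simp: EA_def EB_def EY_def)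
  have ha4: "a\<^sup>2 \<le> kc t (4*p) * EA" using a2 pow_bound_t[of A "4*p" t] assms by (simp add: EA_def)
  have ha2: "a \<le> kc t (2*p) * EA" using a2 pow_bound_t[of A "2*p" t] assms by (simp add: EA_def)
  have hb4: "b\<^sup>2 \<le> kc t (4*p) * EB" using b2 pow_bound_t[of B "4*p" t] assms by (simp add: EB_def)
  have hb2: "b \<le> kc t (2*p) * EB" using b2 pow_bound_t[of B "2*p" t] assms by (simp add: EB_def)
  have hy4: "y\<^sup>2 \<le> kc t 4 * EY" using y2 pow_bound_t[of Y 4 t] assms by (simp add: EY_def)
  have hy2: "y \<le> kc t 2 * EY" using y2 pow_bound_t[of Y 2 t] assms by (simp add: EY_def)
  have k: "0 \<le> kc t (4*p)" "0 \<le> kc t (2*p)" "0 \<le> kc t 4" "0 \<le> kc t 2" by (simp_all add: kc_nonneg)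
  have "a * y \<le> (a\<^sup>2 + y\<^sup>2) / 2" using sum_squares_bound[of a y] by simp
  moreover have "b * y \<le> (b\<^sup>2 + y\<^sup>2) / 2" using sum_squares_bound[of b y] by simp
  ultimately have "(a + b + 1) * (y + 1) \<le> (a\<^sup>2 + y\<^sup>2) / 2 + (b\<^sup>2 + y\<^sup>2) / 2 + a + b + y + 1"
    by (simp add: field_simps)
  also have "\<dots> \<le> (kc t (4*p) * EA + kc t 4 * EY)/2 + (kc t (4*p) * EB + kc t 4 * EY)/2
      + kc t (2*p) * EA + kc t (2*p) * EB + kc t 2 * EY + EA"
  proof -
    have "(a\<^sup>2 + y\<^sup>2) / 2 \<le> (kc t (4*p) * EA + kc t 4 * EY)/2"
      using ha4 hy4 by (intro divide_right_mono add_mono) auto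
    moreover have "(b\<^sup>2 + y\<^sup>2) / 2 \<le> (kc t (4*p) * EB + kc t 4 * EY)/2"
      using hb4 hy4 by (intro divide_right_mono add_mono) auto
    ultimately show ?thesis using ha2 hb2 hy2 e1 by linarith
  qed
  also have "\<dots> \<le> G0c p t * (EA + EB + EY)"
  proof -
    have "(kc t (4*p)/2 + kc t (2*p) + 1) * EA \<le> G0c p t * EA"
      using k e1 by (intro mult_right_mono) (auto simp: G0c_def)
    moreover have "(kc t (4*p)/2 + kc t (2*p)) * EB \<le> G0c p t * EB"
      using k e1 by (intro mult_right_mono) (auto simp: G0c_def)
    moreover have "(kc t 4 + kc t 2) * EY \<le> G0c p t * EY"
      using k e1 by (intro mult_right_mono) (auto simp: G0c_def)
    ultimately show ?thesis unfolding ring_distribs add_divide_distrib by linarith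
  qed
  finally show ?thesis by (simp add: a_def b_def y_def EA_def EB_def EY_def)
qed

lemma PL_L_nonneg:
  assumes "PL_cond \<sigma> q L" shows "0 \<le> L"
proof (rule ccontr)
  assume "\<not> 0 \<le> L"
  hence L: "L < 0" by simp
  have "\<bar>\<sigma> 1 - \<sigma> 0\<bar> \<le> L * (npow \<bar>1\<bar> (q - 1) + npow \<bar>0\<bar> (q - 1) + 1) * \<bar>1 - 0\<bar>"
    using assms unfolding PL_cond_def by blast
  moreover have "0 < npow \<bar>1\<bar> (q - 1) + npow \<bar>0\<bar> (q - 1) + 1"
    using npow_nonneg[of "\<bar>1\<bar>" "q-1"] npow_nonneg[of "\<bar>0\<bar>" "q-1"] by linarith
  ultimately show False using mult_neg_pos[OF L, of "npow \<bar>1\<bar> (q - 1) + npow \<bar>0\<bar> (q - 1) + 1"]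
    by (simp del: abs_0 abs_1)
qed

lemma neuron_bound:
  assumes PL: "PL_cond \<sigma> q L" and q: "q \<ge> 1" and e: "0 \<le> \<epsilon>" and rb: "0 \<le> rb" and t: "0 < t"
    and A: "0 \<le> A" and B: "0 \<le> B" and Y: "0 \<le> Y" and nv: "0 \<le> nv"
    and z1: "\<bar>z1\<bar> \<le> B + \<epsilon> + rb" and z2: "\<bar>z2\<bar> \<le> A + \<epsilon> + rb"
    and z12: "\<bar>z1 - z2\<bar> \<le> nv * (Y + \<epsilon>)" and nvz: "nv\<^sup>2 \<le> 2 * \<zeta>"
  shows "(\<sigma> z1 - \<sigma> z2)\<^sup>2 \<le> 96 * (npow 3 (q-1))\<^sup>2 * G0c (q-1) t * L\<^sup>2 * \<zeta>
           * (1 + npow rb (2*(q-1)) + npow \<epsilon> (2*(q-1))) * (1 + \<epsilon>\<^sup>2)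
           * (exp ((A/t)\<^sup>2) + exp ((B/t)\<^sup>2) + exp ((Y/t)\<^sup>2))"
proof -
  define p where "p = q - 1"
  have p: "0 \<le> p" using q by (simp add: p_def)
  define c3 where "c3 = npow 3 p"
  have c3: "1 \<le> c3" using p by (simp add: c3_def npow_ge1)
  have L: "0 \<le> L" using PL_L_nonneg[OF PL] .
  define PA where "PA = npow A p"
  define PB where "PB = npow B p"
  define Pe where "Pe = npow \<epsilon> p"
  define Pr where "Pr = npow rb p"
  have P0: "0 \<le> PA" "0 \<le> PB" "0 \<le> Pe" "0 \<le> Pr" by (simp_all add: PA_def PB_def Pe_def Pr_def npow_nonneg)
  define X1 where "X1 = PA + PB + 1"
  define X2 where "X2 = Pe + Pr"
  have P1: "npow \<bar>z1\<bar> p \<le> c3 * (PB + Pe + Pr)"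
  proof -
    have "npow \<bar>z1\<bar> p \<le> npow (B + \<epsilon> + rb) p" using z1 p by (intro npow_mono) auto
    also have "\<dots> \<le> c3 * (PB + Pe + Pr)" unfolding c3_def PB_def Pe_def Pr_def
      using B e rb p by (rule npow_sum3)
    finally show ?thesis .
  qed
  have P2: "npow \<bar>z2\<bar> p \<le> c3 * (PA + Pe + Pr)"
  proof -
    have "npow \<bar>z2\<bar> p \<le> npow (A + \<epsilon> + rb) p" using z2 p by (intro npow_mono) auto
    also have "\<dots> \<le> c3 * (PA + Pe + Pr)" unfolding c3_def PA_def Pe_def Pr_def
      using A e rb p by (rule npow_sum3)
    finally show ?thesis .
  qed
  have F: "npow \<bar>z1\<bar> p + npow \<bar>z2\<bar> p + 1 \<le> 2 * c3 * (X1 + X2)"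
  proof -
    have m: "0 \<le> PA * c3" "0 \<le> PB * c3" "0 \<le> c3 * (Pe + Pr)" using P0 c3 by simp_all
    have e1: "c3 * (PB + Pe + Pr) + c3 * (PA + Pe + Pr) + 1 = (PA * c3) + (PB * c3) + 2 * (c3 * (Pe + Pr)) + 1"
      by (simp add: algebra_simps)
    have e2: "2 * c3 * (X1 + X2) = 2 * (PA * c3) + 2 * (PB * c3) + 2 * c3 + 2 * (c3 * (Pe + Pr))"
      unfolding X1_def X2_def by (simp add: algebra_simps)
    have "c3 * (PB + Pe + Pr) + c3 * (PA + Pe + Pr) + 1 \<le> 2 * c3 * (X1 + X2)"
      unfolding e1 e2 using m c3 by linarith
    thus ?thesis using P1 P2 by linarith
  qed
  have D: "\<bar>\<sigma> z1 - \<sigma> z2\<bar> \<le> L * (2 * c3 * (X1 + X2)) * (nv * (Y + \<epsilon>))"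
  proof -
    have "\<bar>\<sigma> z1 - \<sigma> z2\<bar> \<le> L * (npow \<bar>z1\<bar> p + npow \<bar>z2\<bar> p + 1) * \<bar>z1 - z2\<bar>"
      using PL unfolding PL_cond_def p_def by blast
    also have "\<dots> \<le> L * (2 * c3 * (X1 + X2)) * (nv * (Y + \<epsilon>))"
      using L F z12 npow_nonneg[of "\<bar>z1\<bar>" p] npow_nonneg[of "\<bar>z2\<bar>" p] c3 P0
      by (intro mult_mono) (auto simp: X1_def X2_def)
    finally show ?thesis .
  qed
  define G1 where "G1 = PA\<^sup>2 + PB\<^sup>2 + 1"
  define h where "h = Pr\<^sup>2 + Pe\<^sup>2"
  have G1: "1 \<le> G1" by (simp add: G1_def)
  have h0: "0 \<le> h" by (simp add: h_def)
  have X: "(X1 + X2)\<^sup>2 \<le> 6 * G1 * (1 + h)"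
  proof -
    have "(X1 + X2)\<^sup>2 \<le> 2 * X1\<^sup>2 + 2 * X2\<^sup>2" using sum_squares_bound[of X1 X2]
      by (simp add: power2_eq_square algebra_simps)
    moreover have "X1\<^sup>2 \<le> 3 * G1" unfolding X1_def G1_def
      using sum_squares_bound[of PA PB] sum_squares_bound[of PA 1] sum_squares_bound[of PB 1]
      by (simp add: power2_eq_square algebra_simps)
    moreover have "X2\<^sup>2 \<le> 2 * h" unfolding X2_def h_def
      using sum_squares_bound[of Pe Pr] by (simp add: power2_eq_square algebra_simps)
    moreover have "6 * G1 + 4 * h \<le> 6 * G1 * (1 + h)"
    proof -
      have "1 * h \<le> G1 * h" using mult_right_mono[OF G1 h0] .
      hence "6 * G1 + 4 * h \<le> 6 * G1 + 6 * (G1 * h)" using h0 by linarith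
      also have "\<dots> = 6 * G1 * (1 + h)" by (simp add: algebra_simps)
      finally show ?thesis .
    qed
    ultimately show ?thesis by linarith
  qed
  have zeta0: "0 \<le> \<zeta>" using nvz zero_le_power2[of nv] by linarith
  have YE: "(Y + \<epsilon>)\<^sup>2 \<le> 2 * ((Y\<^sup>2 + 1) * (1 + \<epsilon>\<^sup>2))"
  proof -
    have "(Y + \<epsilon>)\<^sup>2 \<le> 2 * (Y\<^sup>2 + \<epsilon>\<^sup>2)" using sum_squares_bound[of Y \<epsilon>]
      by (simp add: power2_eq_square algebra_simps)
    also have "Y\<^sup>2 + \<epsilon>\<^sup>2 \<le> (Y\<^sup>2 + 1) * (1 + \<epsilon>\<^sup>2)"
      by (simp add: algebra_simps)
    finally show ?thesis by simp
  qed
  have "(\<sigma> z1 - \<sigma> z2)\<^sup>2 \<le> (L * (2 * c3 * (X1 + X2)) * (nv * (Y + \<epsilon>)))\<^sup>2"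
    using D by (metis abs_ge_zero order.trans power2_abs power_mono)
  also have "\<dots> = (L\<^sup>2 * (4 * c3\<^sup>2)) * (X1 + X2)\<^sup>2 * nv\<^sup>2 * (Y + \<epsilon>)\<^sup>2"
    by (simp add: power_mult_distrib power2_eq_square)
  also have "\<dots> \<le> (L\<^sup>2 * (4 * c3\<^sup>2)) * (6 * G1 * (1 + h)) * (2 * \<zeta>) * (2 * ((Y\<^sup>2 + 1) * (1 + \<epsilon>\<^sup>2)))"
    using X nvz YE G1 h0 zeta0 by (intro mult_mono) (auto intro!: mult_nonneg_nonneg)
  also have "\<dots> = 96 * c3\<^sup>2 * L\<^sup>2 * \<zeta> * (1 + h) * (1 + \<epsilon>\<^sup>2) * (G1 * (Y\<^sup>2 + 1))"
    by (simp add: algebra_simps)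
  also have "\<dots> \<le> 96 * c3\<^sup>2 * L\<^sup>2 * \<zeta> * (1 + h) * (1 + \<epsilon>\<^sup>2)
      * (G0c p t * (exp ((A/t)\<^sup>2) + exp ((B/t)\<^sup>2) + exp ((Y/t)\<^sup>2)))"
  proof (rule mult_left_mono)
    show "G1 * (Y\<^sup>2 + 1) \<le> G0c p t * (exp ((A/t)\<^sup>2) + exp ((B/t)\<^sup>2) + exp ((Y/t)\<^sup>2))"
      unfolding G1_def PA_def PB_def using G0_bound[OF A B Y p t] .
    show "0 \<le> 96 * c3\<^sup>2 * L\<^sup>2 * \<zeta> * (1 + h) * (1 + \<epsilon>\<^sup>2)" using h0 zeta0 by simp
  qed
  also have "1 + h = 1 + npow rb (2*(q-1)) + npow \<epsilon> (2*(q-1))"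
    using npow_sq[OF rb p] npow_sq[OF e p] by (simp add: h_def Pr_def Pe_def p_def)
  finally show ?thesis by (simp add: c3_def p_def algebra_simps)
qed

lemma meas_dot:
  assumes "\<forall>i<d. integrable M (\<lambda>x. x i)"
  shows "(\<lambda>x. dot d u x) \<in> borel_measurable M"
  unfolding dot_def
proof (intro borel_measurable_sum borel_measurable_times)
  fix i assume "i \<in> {..<d}"
  thus "(\<lambda>x. x i) \<in> borel_measurable M" using assms by (auto intro: borel_measurable_integrable)
qed auto

lemma meas_E:
  assumes "\<forall>i<d. integrable M (\<lambda>x. x i)"
  shows "(\<lambda>x. ennreal (exp ((dot d u x)\<^sup>2 / t\<^sup>2))) \<in> borel_measurable M"
proof -
  note m = meas_dot[OF assms, of u]
  show ?thesis using m by measurable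
qed

definition Phi :: "nat \<Rightarrow> real \<Rightarrow> (nat \<Rightarrow> real) \<Rightarrow> (nat \<Rightarrow> real) \<Rightarrow> (nat \<Rightarrow> real) \<Rightarrow> (nat \<Rightarrow> real) \<Rightarrow> real" where
  "Phi d t u1 u2 u3 x = exp ((dot d u1 x)\<^sup>2 / t\<^sup>2) + exp ((dot d u2 x)\<^sup>2 / t\<^sup>2) + exp ((dot d u3 x)\<^sup>2 / t\<^sup>2)"

lemma integ_part:
  assumes fin: "finite S" and c0: "0 \<le> c0"
    and int: "\<forall>i<d. integrable M (\<lambda>x. x i)"
    and psi: "vec_psi2_norm d M \<le> ereal K" "K < t"
    and u: "\<And>j. j \<in> S \<Longrightarrow> vnorm d (u1 j) = 1 \<and> vnorm d (u2 j) = 1 \<and> vnorm d (u3 j) = 1"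
  shows "(\<integral>\<^sup>+ x. ennreal (c0 * (\<Sum>j\<in>S. Phi d t (u1 j) (u2 j) (u3 j) x)) \<partial>M)
         \<le> ennreal (c0 * (6 * real (card S)))"
proof -
  have Pn: "0 \<le> Phi d t (u1 j) (u2 j) (u3 j) x" for j x by (simp add: Phi_def add_nonneg_nonneg)
  have eq: "ennreal (c0 * (\<Sum>j\<in>S. Phi d t (u1 j) (u2 j) (u3 j) x))
      = ennreal c0 * (\<Sum>j\<in>S. (ennreal (exp ((dot d (u1 j) x)\<^sup>2 / t\<^sup>2)) + ennreal (exp ((dot d (u2 j) x)\<^sup>2 / t\<^sup>2)))
                               + ennreal (exp ((dot d (u3 j) x)\<^sup>2 / t\<^sup>2)))" for x
  proof -
    have "(\<Sum>j\<in>S. (ennreal (exp ((dot d (u1 j) x)\<^sup>2 / t\<^sup>2)) + ennreal (exp ((dot d (u2 j) x)\<^sup>2 / t\<^sup>2)))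
                               + ennreal (exp ((dot d (u3 j) x)\<^sup>2 / t\<^sup>2)))
         = (\<Sum>j\<in>S. ennreal (Phi d t (u1 j) (u2 j) (u3 j) x))"
      by (intro sum.cong refl) (simp add: Phi_def add_nonneg_nonneg del: ennreal_plus add: ennreal_plus[symmetric])
    also have "\<dots> = ennreal (\<Sum>j\<in>S. Phi d t (u1 j) (u2 j) (u3 j) x)"
      using Pn by simp
    finally show ?thesis using c0 Pn by (simp add: ennreal_mult sum_nonneg)
  qed
  have "(\<integral>\<^sup>+ x. ennreal (c0 * (\<Sum>j\<in>S. Phi d t (u1 j) (u2 j) (u3 j) x)) \<partial>M)
      = ennreal c0 * (\<Sum>j\<in>S. ((\<integral>\<^sup>+ x. ennreal (exp ((dot d (u1 j) x)\<^sup>2 / t\<^sup>2)) \<partial>M)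
            + (\<integral>\<^sup>+ x. ennreal (exp ((dot d (u2 j) x)\<^sup>2 / t\<^sup>2)) \<partial>M))
            + (\<integral>\<^sup>+ x. ennreal (exp ((dot d (u3 j) x)\<^sup>2 / t\<^sup>2)) \<partial>M))"
    unfolding eq using meas_E[OF int]
    by (simp add: nn_integral_cmult nn_integral_sum nn_integral_add borel_measurable_sum)
  also have "\<dots> \<le> ennreal c0 * (\<Sum>j\<in>S. (2 + 2) + 2)"
    using psi_bound[OF psi] u
    by (intro mult_left_mono sum_mono add_mono) auto
  also have "\<dots> = ennreal (c0 * (6 * real (card S)))"
    using c0 by (simp add: ennreal_mult ennreal_of_nat_eq_real_of_nat mult.commute)
  finally show ?thesis .
qed

definition uvec :: "nat \<Rightarrow> nat \<Rightarrow> (nat \<Rightarrow> nat \<Rightarrow> real) \<Rightarrow> (nat \<Rightarrow> real) \<Rightarrow> (nat \<Rightarrow> real)" where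
  "uvec d k U w = (if vnorm d (\<lambda>i. proj_U k d U w i - w i) = 0 then w
     else (\<lambda>i. (proj_U k d U w i - w i) / vnorm d (\<lambda>i. proj_U k d U w i - w i)))"

lemma uvec_norm:
  assumes "vnorm d w = 1"
  shows "vnorm d (uvec d k U w) = 1"
proof (cases "vnorm d (\<lambda>i. proj_U k d U w i - w i) = 0")
  case True thus ?thesis using assms by (simp add: uvec_def)
next
  case False
  define v where "v = (\<lambda>i. proj_U k d U w i - w i)"
  define n where "n = vnorm d v"
  have n: "n \<noteq> 0" using False by (simp add: n_def v_def)
  have "dot d (\<lambda>i. v i / n) (\<lambda>i. v i / n) = dot d v v / n\<^sup>2"
    by (simp add: dot_def sum_divide_distrib power2_eq_square)
  also have "\<dots> = 1" using n vnorm_sq[of d v] by (metis n_def divide_self power_not_zero)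
  moreover have "uvec d k U w = (\<lambda>i. v i / n)" using False by (simp add: uvec_def v_def n_def)
  ultimately show ?thesis by (simp add: vnorm_def)
qed

lemma uvec_dot:
  "dot d (\<lambda>i. proj_U k d U w i - w i) x = vnorm d (\<lambda>i. proj_U k d U w i - w i) * dot d (uvec d k U w) x"
proof (cases "vnorm d (\<lambda>i. proj_U k d U w i - w i) = 0")
  case True
  have "\<bar>dot d (\<lambda>i. proj_U k d U w i - w i) x\<bar> \<le> 0" using dot_CS[of d "\<lambda>i. proj_U k d U w i - w i" x] True by simp
  thus ?thesis using True by simp
next
  case False thus ?thesis by (simp add: uvec_def dot_scale_left)
qed

lemma pointwise_j:
  assumes k: "k \<ge> 1" "orthonormal_rows k d U" and w: "vnorm d w = 1"
    and bj: "\<bar>bj\<bar> \<le> rb" and PL: "PL_cond \<sigma> q L" and q: "q \<ge> 1" and e: "0 \<le> \<epsilon>" and t: "0 < t"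
    and z: "(vnorm d (\<lambda>i. proj_U k d U w i - w i))\<^sup>2 \<le> 2 * \<zeta>"
    and dl: "\<delta> \<in> dball d \<epsilon>"
  shows "(\<sigma> (dot d (proj_U k d U w) (\<lambda>i. x i + \<delta> i) + bj) - \<sigma> (dot d w (\<lambda>i. x i + \<delta> i) + bj))\<^sup>2
     \<le> 96 * (npow 3 (q-1))\<^sup>2 * G0c (q-1) t * L\<^sup>2 * \<zeta>
           * (1 + npow rb (2*(q-1)) + npow \<epsilon> (2*(q-1))) * (1 + \<epsilon>\<^sup>2)
           * Phi d t w (proj_U k d U w) (uvec d k U w) x"
proof -
  define pw where "pw = proj_U k d U w"
  define v where "v = (\<lambda>i. pw i - w i)"
  define nv where "nv = vnorm d v"
  define u where "u = uvec d k U w"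
  have pw1: "vnorm d pw = 1" using proj_norm[OF k] by (simp add: pw_def)
  have dn: "vnorm d \<delta> \<le> \<epsilon>" using dl by (simp add: dball_def)
  have rb: "0 \<le> rb" using bj by linarith
  define A where "A = \<bar>dot d w x\<bar>"
  define B where "B = \<bar>dot d pw x\<bar>"
  define Y where "Y = \<bar>dot d u x\<bar>"
  have wd: "\<bar>dot d w \<delta>\<bar> \<le> \<epsilon>" using dot_CS[of d w \<delta>] w dn by simp
  have pd: "\<bar>dot d pw \<delta>\<bar> \<le> \<epsilon>" using dot_CS[of d pw \<delta>] pw1 dn by simp
  have nv0: "0 \<le> nv" by (simp add: nv_def vnorm_nonneg)
  have vd: "\<bar>dot d v \<delta>\<bar> \<le> nv * \<epsilon>"
    using dot_CS[of d v \<delta>] mult_left_mono[OF dn nv0] unfolding nv_def by linarith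
  have z1: "\<bar>dot d pw (\<lambda>i. x i + \<delta> i) + bj\<bar> \<le> B + \<epsilon> + rb"
    using pd bj unfolding B_def dot_add_right by linarith
  have z2: "\<bar>dot d w (\<lambda>i. x i + \<delta> i) + bj\<bar> \<le> A + \<epsilon> + rb"
    using wd bj unfolding A_def dot_add_right by linarith
  have vx: "dot d v x = nv * dot d u x" using uvec_dot[of d k U w x] by (simp add: v_def nv_def u_def pw_def)
  have eqd: "(dot d pw (\<lambda>i. x i + \<delta> i) + bj) - (dot d w (\<lambda>i. x i + \<delta> i) + bj) = dot d v x + dot d v \<delta>"
    unfolding v_def dot_diff_left dot_add_right by simp
  have z12: "\<bar>(dot d pw (\<lambda>i. x i + \<delta> i) + bj) - (dot d w (\<lambda>i. x i + \<delta> i) + bj)\<bar> \<le> nv * (Y + \<epsilon>)"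
  proof -
    have "\<bar>dot d v x + dot d v \<delta>\<bar> \<le> \<bar>dot d v x\<bar> + \<bar>dot d v \<delta>\<bar>" by (rule abs_triangle_ineq)
    moreover have "\<bar>dot d v x\<bar> = nv * Y" using vx nv0 by (simp add: Y_def abs_mult)
    ultimately have "\<bar>dot d v x + dot d v \<delta>\<bar> \<le> nv * Y + nv * \<epsilon>" using vd by linarith
    thus ?thesis unfolding eqd by (simp add: distrib_left)
  qed
  have nvz: "nv\<^sup>2 \<le> 2 * \<zeta>" using z by (simp add: nv_def v_def pw_def)
  have "(\<sigma> (dot d pw (\<lambda>i. x i + \<delta> i) + bj) - \<sigma> (dot d w (\<lambda>i. x i + \<delta> i) + bj))\<^sup>2
     \<le> 96 * (npow 3 (q-1))\<^sup>2 * G0c (q-1) t * L\<^sup>2 * \<zeta>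
           * (1 + npow rb (2*(q-1)) + npow \<epsilon> (2*(q-1))) * (1 + \<epsilon>\<^sup>2)
           * (exp ((A/t)\<^sup>2) + exp ((B/t)\<^sup>2) + exp ((Y/t)\<^sup>2))"
    by (rule neuron_bound[OF PL q e rb t _ _ _ nv0 z1 z2 z12 nvz]) (simp_all add: A_def B_def Y_def)
  also have "exp ((A/t)\<^sup>2) + exp ((B/t)\<^sup>2) + exp ((Y/t)\<^sup>2) = Phi d t w (proj_U k d U w) (uvec d k U w) x"
    by (simp add: Phi_def A_def B_def Y_def u_def pw_def power_divide)
  finally show ?thesis by (simp add: pw_def)
qed

lemma G0c_nonneg: "0 \<le> G0c p t"
  by (simp add: G0c_def kc_nonneg add_nonneg_nonneg)

lemma main_bound:
  fixes q K :: real
  assumes q: "q \<ge> 1" and K: "K > 0"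
    and k: "k \<ge> 1" and ort: "orthonormal_rows k d U"
    and Wn: "\<forall>j<N. vnorm d (W j) = 1" and rb: "r_b \<ge> 0" and bb: "\<forall>j<N. \<bar>b j\<bar> \<le> r_b"
    and SN: "S \<subseteq> {..<N}"
    and Sz: "\<forall>j\<in>S. (vnorm d (\<lambda>i. proj_U k d U (W j) i - W j i))\<^sup>2 \<le> 2 * \<zeta>"
    and aS: "\<forall>j. j \<notin> S \<longrightarrow> a j = 0" and an: "vnorm N a \<le> r_a / sqrt (real (card S))"
    and int: "\<forall>i<d. integrable M (\<lambda>x. x i) \<and> (\<integral>x. x i \<partial>M) = 0"
    and psi: "vec_psi2_norm d M \<le> ereal K"
    and PL: "PL_cond \<sigma> q L" and e: "\<epsilon> \<ge> 0"
  shows "(\<integral>\<^sup>+ x. ennreal (SUP \<delta>\<in>dball d \<epsilon>.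
              (net N d \<sigma> a (projW k d U W) b (\<lambda>i. x i + \<delta> i) - net N d \<sigma> a W b (\<lambda>i. x i + \<delta> i))\<^sup>2) \<partial>M)
         \<le> ennreal ((6 * (96 * (npow 3 (q-1))\<^sup>2 * G0c (q-1) (2*K))) * L\<^sup>2 * r_a\<^sup>2 * (1 + npow r_b (2 * (q - 1)) + npow \<epsilon> (2 * (q - 1)))
                     * (1 + \<epsilon>\<^sup>2) * \<zeta>)"
proof -
  define t where "t = 2 * K"
  have t: "0 < t" "K < t" using K by (auto simp: t_def)
  define H1 where "H1 = 1 + npow r_b (2 * (q - 1)) + npow \<epsilon> (2 * (q - 1))"
  define Cn where "Cn = 96 * (npow 3 (q-1))\<^sup>2 * G0c (q-1) t"
  define K1 where "K1 = Cn * L\<^sup>2 * \<zeta> * H1 * (1 + \<epsilon>\<^sup>2)"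
  define F where "F = (\<lambda>x \<delta>. (net N d \<sigma> a (projW k d U W) b (\<lambda>i. x i + \<delta> i) - net N d \<sigma> a W b (\<lambda>i. x i + \<delta> i))\<^sup>2)"
  have z0: "(\<lambda>_. 0) \<in> dball d \<epsilon>" using e by (simp add: dball_def vnorm_def dot_def)
  hence dne: "dball d \<epsilon> \<noteq> {}" by blast
  define D where "D = (\<lambda>x \<delta> j. \<sigma> (dot d (proj_U k d U (W j)) (\<lambda>i. x i + \<delta> i) + b j) - \<sigma> (dot d (W j) (\<lambda>i. x i + \<delta> i) + b j))"
  have finS: "finite S" using SN finite_subset by blast
  have netdiff: "net N d \<sigma> a (projW k d U W) b (\<lambda>i. x i + \<delta> i) - net N d \<sigma> a W b (\<lambda>i. x i + \<delta> i)
      = (\<Sum>j\<in>S. a j * D x \<delta> j)" for x \<delta>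
  proof -
    have "net N d \<sigma> a (projW k d U W) b (\<lambda>i. x i + \<delta> i) - net N d \<sigma> a W b (\<lambda>i. x i + \<delta> i)
        = (\<Sum>j<N. a j * D x \<delta> j)"
      unfolding net_def projW_def D_def by (simp add: sum_subtractf[symmetric] algebra_simps)
    also have "\<dots> = (\<Sum>j\<in>S. a j * D x \<delta> j)"
      using SN aS by (intro sum.mono_neutral_right) auto
    finally show ?thesis .
  qed
  show ?thesis
  proof (cases "S = {}")
    case True
    have "F x \<delta> = 0" for x \<delta> unfolding F_def netdiff using True by simp
    hence "(SUP \<delta>\<in>dball d \<epsilon>. F x \<delta>) = 0" for x using dne by simp
    hence "(\<integral>\<^sup>+ x. ennreal (SUP \<delta>\<in>dball d \<epsilon>. F x \<delta>) \<partial>M) = 0" by simp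
    thus ?thesis unfolding F_def by simp
  next
    case False
    define cS where "cS = real (card S)"
    have cS: "cS > 0" using False finS by (simp add: cS_def card_gt_0_iff)
    obtain j0 where j0: "j0 \<in> S" using False by blast
    have "(vnorm d (\<lambda>i. proj_U k d U (W j0) i - W j0 i))\<^sup>2 \<le> 2 * \<zeta>" using Sz j0 by blast
    hence zeta0: "0 \<le> \<zeta>" using zero_le_power2[of "vnorm d (\<lambda>i. proj_U k d U (W j0) i - W j0 i)"]
      by linarith
    have "0 \<le> r_a / sqrt cS" using an vnorm_nonneg[of N a] unfolding cS_def by linarith
    hence ra0: "0 \<le> r_a" using cS by (simp add: zero_le_divide_iff)
    have asq: "(\<Sum>j\<in>S. (a j)\<^sup>2) \<le> r_a\<^sup>2 / cS"
    proof -
      have "(vnorm N a)\<^sup>2 \<le> (r_a / sqrt cS)\<^sup>2"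
        using an vnorm_nonneg[of N a] by (intro power_mono) (auto simp: cS_def)
      also have "\<dots> = r_a\<^sup>2 / cS" using cS by (simp add: power_divide)
      also have "(vnorm N a)\<^sup>2 = (\<Sum>j<N. (a j)\<^sup>2)" unfolding vnorm_sq dot_def by (simp add: power2_eq_square)
      also have "\<dots> = (\<Sum>j\<in>S. (a j)\<^sup>2)" using SN aS by (intro sum.mono_neutral_right) auto
      finally show ?thesis .
    qed
    define c0 where "c0 = r_a\<^sup>2 / cS * K1"
    have K10: "0 \<le> K1" unfolding K1_def Cn_def H1_def using zeta0 G0c_nonneg
      by (intro mult_nonneg_nonneg) (auto simp: npow_nonneg add_nonneg_nonneg)
    have c00: "0 \<le> c0" using K10 cS by (simp add: c0_def)
    define P where "P = (\<lambda>j x. Phi d t (W j) (proj_U k d U (W j)) (uvec d k U (W j)) x)"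
    have Dj: "(D x \<delta> j)\<^sup>2 \<le> K1 * P j x" if "j \<in> S" "\<delta> \<in> dball d \<epsilon>" for x \<delta> j
    proof -
      have jN: "j < N" using that SN by auto
      have "(D x \<delta> j)\<^sup>2 \<le> Cn * L\<^sup>2 * \<zeta> * H1 * (1 + \<epsilon>\<^sup>2) * P j x"
        unfolding D_def Cn_def H1_def P_def
        using pointwise_j[OF k ort _ _ PL q e t(1) _ that(2)] Wn bb jN Sz that(1) by blast
      thus ?thesis by (simp add: K1_def)
    qed
    have Fb: "F x \<delta> \<le> c0 * (\<Sum>j\<in>S. P j x)" if "\<delta> \<in> dball d \<epsilon>" for x \<delta>
    proof -
      have "F x \<delta> = (\<Sum>j\<in>S. a j * D x \<delta> j)\<^sup>2" unfolding F_def netdiff ..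
      also have "\<dots> \<le> (\<Sum>j\<in>S. (a j)\<^sup>2) * (\<Sum>j\<in>S. (D x \<delta> j)\<^sup>2)" by (rule Cauchy_Schwarz_ineq_sum)
      also have "\<dots> \<le> (r_a\<^sup>2 / cS) * (\<Sum>j\<in>S. K1 * P j x)"
        using asq Dj that cS by (intro mult_mono sum_mono) (auto intro: sum_nonneg)
      also have "\<dots> = c0 * (\<Sum>j\<in>S. P j x)" by (simp add: c0_def sum_distrib_left mult.assoc)
      finally show ?thesis .
    qed
    have "(\<integral>\<^sup>+ x. ennreal (SUP \<delta>\<in>dball d \<epsilon>. F x \<delta>) \<partial>M) \<le> (\<integral>\<^sup>+ x. ennreal (c0 * (\<Sum>j\<in>S. P j x)) \<partial>M)"
    proof (rule nn_integral_mono)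
      fix x
      have "(SUP \<delta>\<in>dball d \<epsilon>. F x \<delta>) \<le> c0 * (\<Sum>j\<in>S. P j x)"
        using Fb dne by (intro cSUP_least) auto
      thus "ennreal (SUP \<delta>\<in>dball d \<epsilon>. F x \<delta>) \<le> ennreal (c0 * (\<Sum>j\<in>S. P j x))" by (rule ennreal_leI)
    qed
    also have "\<dots> \<le> ennreal (c0 * (6 * cS))"
      unfolding P_def cS_def
    proof (rule integ_part[OF finS c00 _ psi t(2)])
      show "\<forall>i<d. integrable M (\<lambda>x. x i)" using int by blast
      fix j assume "j \<in> S"
      hence jN: "j < N" using SN by auto
      show "vnorm d (W j) = 1 \<and> vnorm d (proj_U k d U (W j)) = 1 \<and> vnorm d (uvec d k U (W j)) = 1"
        using Wn jN proj_norm[OF k ort] uvec_norm by blast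
    qed
    also have "c0 * (6 * cS) = (6 * (96 * (npow 3 (q-1))\<^sup>2 * G0c (q-1) (2*K))) * L\<^sup>2 * r_a\<^sup>2 * (1 + npow r_b (2 * (q - 1)) + npow \<epsilon> (2 * (q - 1)))
                     * (1 + \<epsilon>\<^sup>2) * \<zeta>"
    proof -
      have "c0 * (6 * cS) = 6 * r_a\<^sup>2 * K1" using cS by (simp add: c0_def)
      thus ?thesis by (simp add: K1_def Cn_def H1_def t_def algebra_simps)
    qed
    finally show ?thesis unfolding F_def .
  qed
qed

theorem lemmaD:
  fixes q K :: real
  assumes "q \<ge> 1" and "K > 0"
  shows "\<exists>C. \<forall>(d::nat) (k::nat) (N::nat) U W b S a (M :: (nat \<Rightarrow> real) measure)
              (\<sigma> :: real \<Rightarrow> real) L \<epsilon> \<zeta> r_b r_a.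
     ( k \<ge> 1 \<and> orthonormal_rows k d U
     \<and> (\<forall>j<N. vnorm d (W j) = 1) \<and> r_b \<ge> 0 \<and> (\<forall>j<N. \<bar>b j\<bar> \<le> r_b)
     \<and> S \<subseteq> {..<N}
     \<and> (\<forall>j\<in>S. (vnorm d (\<lambda>i. proj_U k d U (W j) i - W j i))\<^sup>2 \<le> 2 * \<zeta>)
     \<and> (\<forall>j. j \<notin> S \<longrightarrow> a j = 0) \<and> vnorm N a \<le> r_a / sqrt (real (card S))
     \<and> prob_space M
     \<and> (\<forall>i<d. integrable M (\<lambda>x. x i) \<and> (\<integral>x. x i \<partial>M) = 0)
     \<and> vec_psi2_norm d M \<le> ereal K
     \<and> PL_cond \<sigma> q L \<and> \<epsilon> \<ge> 0 )
     \<longrightarrow> (\<integral>\<^sup>+ x. ennreal (SUP \<delta>\<in>dball d \<epsilon>.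
              (net N d \<sigma> a (projW k d U W) b (\<lambda>i. x i + \<delta> i) - net N d \<sigma> a W b (\<lambda>i. x i + \<delta> i))\<^sup>2) \<partial>M)
         \<le> ennreal (C * L\<^sup>2 * r_a\<^sup>2 * (1 + npow r_b (2 * (q - 1)) + npow \<epsilon> (2 * (q - 1)))
                     * (1 + \<epsilon>\<^sup>2) * \<zeta>)"
  apply (rule exI[of _ "6 * (96 * (npow 3 (q-1))\<^sup>2 * G0c (q-1) (2*K))"])
  apply (intro allI impI)
  apply (elim conjE)
  apply (rule main_bound[OF assms])
  apply assumption+
  done

end
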